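(* Let $\mathcal{D}$ be a domain, $G$ a subgroup of $\mathrm{IET}(\mathcal{D})$, $(A,+)$ a finite abelian group, and $J\subset\mathcal{D}$ a subdomain. Let $\mathcal{F}=A^{\mathcal{D}}$ be the additive group of all functions $\mathcal{D}\to A$, on which $G$ acts by $g\cdot f=f\circ g^{-1}$. For $a\in A$ let $a\mathbb{1}_J\in\mathcal{F}$ be the function equal to $a$ on $J$ and $0$ elsewhere, and let $\mathcal{F}_J$ be the smallest $G$-invariant subgroup of $\mathcal{F}$ containing all $a\mathbb{1}_J$, $a\in A$. Then the semidirect product $\mathcal{F}_J\rtimes G$ embeds in $\mathrm{IET}$.
   Context: A domain is a non-empty disjoint union of finitely many oriented circles and oriented half-open bounded intervals closed on the left; a subdomain is a subset that is itself a domain. $\mathrm{IET}(\mathcal{D})$ is the group of bijections of $\mathcal{D}$ that are orientation-preserving piecewise isometries, left-continuous, with finitely many discontinuity points; $\mathrm{IET}=\mathrm{IET}([0,1))$. *)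

theory Defs
  imports Complex_Main "HOL-Algebra.Group"
begin

text \<open>A domain: components 0..<ncomp, component i is [0, len i) in coordinates,
  which is a circle of length len i if circ i holds, otherwise a half-open interval.
  Points are pairs (i, x).\<close>

record domain =
  ncomp :: nat
  len :: "nat \<Rightarrow> real"
  circ :: "nat \<Rightarrow> bool"

definition is_domain :: "domain \<Rightarrow> bool" where
  "is_domain D \<longleftrightarrow> ncomp D > 0 \<and> (\<forall>i < ncomp D. len D i > 0)"

definition pts :: "domain \<Rightarrow> (nat \<times> real) set" where
  "pts D = {(i, x). i < ncomp D \<and> 0 \<le> x \<and> x < len D i}"

definition wrap :: "domain \<Rightarrow> nat \<Rightarrow> real \<Rightarrow> real" where
  "wrap D j z = (if circ D j then z - len D j * of_int \<lfloor>z / len D j\<rfloor> else z)"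

text \<open>Elements of IET(D), normalised to be the identity off the domain:
  bijections of D which, off a finite set B of breakpoints, are given on every
  half-open coordinate interval [a,b) (containing no breakpoint in its interior)
  by an orientation-preserving isometry (translation/rotation) into one component.\<close>
definition IET_maps :: "domain \<Rightarrow> ((nat \<times> real) \<Rightarrow> (nat \<times> real)) set" where
  "IET_maps D = {f. bij_betw f (pts D) (pts D) \<and> (\<forall>p. p \<notin> pts D \<longrightarrow> f p = p) \<and>
     (\<exists>B. finite B \<and>
       (\<forall>i a b. i < ncomp D \<and> 0 \<le> a \<and> a < b \<and> b \<le> len D i \<and>
                (\<forall>y. a < y \<and> y < b \<longrightarrow> (i, y) \<notin> B) \<longrightarrow>
          (\<exists>j t. j < ncomp D \<and> (\<forall>y. a \<le> y \<and> y < b \<longrightarrow> f (i, y) = (j, wrap D j (y + t))))))}"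

definition IET_group :: "domain \<Rightarrow> ((nat \<times> real) \<Rightarrow> (nat \<times> real)) monoid" where
  "IET_group D = \<lparr>carrier = IET_maps D, mult = (\<circ>), one = id\<rparr>"

definition unit_interval :: domain where
  "unit_interval = \<lparr>ncomp = 1, len = (\<lambda>_. 1), circ = (\<lambda>_. False)\<rparr>"

definition IET :: "((nat \<times> real) \<Rightarrow> (nat \<times> real)) monoid" where
  "IET = IET_group unit_interval"

definition subdomain :: "domain \<Rightarrow> (nat \<times> real) set \<Rightarrow> bool" where
  "subdomain D J \<longleftrightarrow> J \<noteq> {} \<and>
     (\<exists>S. finite S \<and> (\<forall>(i, a, b) \<in> S. i < ncomp D \<and> 0 \<le> a \<and> a < b \<and> b \<le> len D i) \<and>
          J = (\<Union>(i, a, b) \<in> S. {(i, x) | x. a \<le> x \<and> x < b}))"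

text \<open>F = A^D, realised as functions vanishing off D.\<close>
definition Fun_grp :: "domain \<Rightarrow> ((nat \<times> real) \<Rightarrow> 'a::ab_group_add) set" where
  "Fun_grp D = {f. \<forall>p. p \<notin> pts D \<longrightarrow> f p = 0}"

definition ind_on :: "(nat \<times> real) set \<Rightarrow> 'a::ab_group_add \<Rightarrow> (nat \<times> real) \<Rightarrow> 'a" where
  "ind_on J a = (\<lambda>p. if p \<in> J then a else 0)"

definition act :: "((nat \<times> real) \<Rightarrow> (nat \<times> real)) \<Rightarrow> ((nat \<times> real) \<Rightarrow> 'a) \<Rightarrow> (nat \<times> real) \<Rightarrow> 'a" where
  "act g f = f \<circ> inv_into UNIV g"

definition F_J :: "domain \<Rightarrow> ((nat \<times> real) \<Rightarrow> (nat \<times> real)) set \<Rightarrow> (nat \<times> real) set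
                   \<Rightarrow> ((nat \<times> real) \<Rightarrow> 'a::ab_group_add) set" where
  "F_J D G J = \<Inter> {H. H \<subseteq> Fun_grp D \<and> (\<lambda>_. 0) \<in> H \<and>
                     (\<forall>f\<in>H. \<forall>h\<in>H. (\<lambda>p. f p + h p) \<in> H) \<and> (\<forall>f\<in>H. (\<lambda>p. - f p) \<in> H) \<and>
                     (\<forall>g\<in>G. \<forall>f\<in>H. act g f \<in> H) \<and> (\<forall>a. ind_on J a \<in> H)}"

definition semidirect :: "domain \<Rightarrow> ((nat \<times> real) \<Rightarrow> (nat \<times> real)) set \<Rightarrow> (nat \<times> real) set
     \<Rightarrow> (((nat \<times> real) \<Rightarrow> 'a::ab_group_add) \<times> ((nat \<times> real) \<Rightarrow> (nat \<times> real))) monoid" where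
  "semidirect D G J = \<lparr>carrier = F_J D G J \<times> G,
      mult = (\<lambda>(f, g) (f', g'). ((\<lambda>p. f p + act g f' p), g \<circ> g')),
      one = ((\<lambda>_. 0), id)\<rparr>"

end

theory Submission
  imports Defs
begin


lemma wrap_nc: "\<not> circ D j \<Longrightarrow> wrap D j z = z"
  by (simp add: wrap_def)

lemma wrap_in: "0 \<le> z \<Longrightarrow> z < len D j \<Longrightarrow> wrap D j z = z"
proof -
  assume a: "0 \<le> z" "z < len D j"
  then have "len D j > 0" by linarith
  then have "\<lfloor>z / len D j\<rfloor> = 0" using a by (simp add: floor_eq_iff)
  then show ?thesis by (simp add: wrap_def)
qed

lemma IET_props:
  assumes "g \<in> IET_maps D"
  shows "bij_betw g (pts D) (pts D)" "\<And>p. p \<notin> pts D \<Longrightarrow> g p = p"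
  using assms unfolding IET_maps_def by auto

lemma IET_bij:
  assumes "g \<in> IET_maps D"
  shows "bij g"
proof -
  note P = IET_props[OF assms]
  have inj: "inj g"
  proof (rule injI)
    fix x y assume e: "g x = g y"
    show "x = y"
    proof (cases "x \<in> pts D"; cases "y \<in> pts D")
      assume "x \<in> pts D" "y \<in> pts D" then show ?thesis using e P(1) by (metis bij_betw_inv_into_left)
    next
      assume "x \<in> pts D" "y \<notin> pts D" then show ?thesis using e P by (metis bij_betwE)
    next
      assume "x \<notin> pts D" "y \<in> pts D" then show ?thesis using e P by (metis bij_betwE)
    next
      assume "x \<notin> pts D" "y \<notin> pts D" then show ?thesis using e P by metis
    qed
  qed
  have "surj g"
  proof -
    have "\<exists>x. y = g x" for y
    proof (cases "y \<in> pts D")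
      case True then show ?thesis using P(1) by (metis bij_betw_inv_into_right)
    next
      case False then show ?thesis using P(2) by metis
    qed
    then show ?thesis by blast
  qed
  with inj show ?thesis by (simp add: bij_def)
qed

lemma IET_pts:
  assumes "g \<in> IET_maps D"
  shows "g p \<in> pts D \<longleftrightarrow> p \<in> pts D"
  using IET_props[OF assms] by (metis bij_betwE)

lemma IET_inv_pts:
  assumes "g \<in> IET_maps D"
  shows "inv_into UNIV g p \<in> pts D \<longleftrightarrow> p \<in> pts D"
proof -
  have b: "bij g" using IET_bij[OF assms] .
  have "g (inv_into UNIV g p) = p" using surj_f_inv_f[OF bij_is_surj[OF b]] .
  then show ?thesis using IET_pts[OF assms, of "inv_into UNIV g p"] by simp
qed

lemma IET_B:
  assumes "g \<in> IET_maps D"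
  shows "\<exists>B. finite B \<and>
       (\<forall>i a b. i < ncomp D \<and> 0 \<le> a \<and> a < b \<and> b \<le> len D i \<and>
                (\<forall>y. a < y \<and> y < b \<longrightarrow> (i, y) \<notin> B) \<longrightarrow>
          (\<exists>j t. j < ncomp D \<and> (\<forall>y. a \<le> y \<and> y < b \<longrightarrow> g (i, y) = (j, wrap D j (y + t)))))"
  using assms unfolding IET_maps_def mem_Collect_eq by (elim conjE) assumption

lemma normalize:
  assumes g: "g \<in> IET_maps D"
  shows "\<exists>B. finite B \<and> (\<forall>i a b. i < ncomp D \<and> 0 \<le> a \<and> a < b \<and> b \<le> len D i \<and>
                (\<forall>y. a < y \<and> y < b \<longrightarrow> (i, y) \<notin> B) \<longrightarrow>
          (\<exists>j t. j < ncomp D \<and> (\<forall>y. a \<le> y \<and> y < b \<longrightarrow> g (i, y) = (j, y + t))))"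
proof -
  obtain B where fB: "finite B" and HB: "\<forall>i a b. i < ncomp D \<and> 0 \<le> a \<and> a < b \<and> b \<le> len D i \<and>
                (\<forall>y. a < y \<and> y < b \<longrightarrow> (i, y) \<notin> B) \<longrightarrow>
          (\<exists>j t. j < ncomp D \<and> (\<forall>y. a \<le> y \<and> y < b \<longrightarrow> g (i, y) = (j, wrap D j (y + t))))"
    using IET_B[OF g] by blast
  define B' where "B' = B \<union> g -` ((\<lambda>j. (j, 0::real)) ` {..<ncomp D})"
  have "inj g" using IET_bij[OF g] bij_is_inj by blast
  then have fB': "finite B'" unfolding B'_def using fB by (simp add: finite_vimageI)
  have "\<exists>j t. j < ncomp D \<and> (\<forall>y. a \<le> y \<and> y < b \<longrightarrow> g (i, y) = (j, y + t))"
    if h: "i < ncomp D" "0 \<le> a" "a < b" "b \<le> len D i" "\<forall>y. a < y \<and> y < b \<longrightarrow> (i, y) \<notin> B'" for i a b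
  proof -
    from h have "\<forall>y. a < y \<and> y < b \<longrightarrow> (i, y) \<notin> B" unfolding B'_def by blast
    then obtain j t where j: "j < ncomp D" and jt: "\<And>y. a \<le> y \<Longrightarrow> y < b \<Longrightarrow> g (i, y) = (j, wrap D j (y + t))"
      using HB h(1-4) by blast
    show ?thesis
    proof (cases "circ D j")
      case False then show ?thesis using j jt by (auto simp: wrap_nc)
    next
      case True
      define L where "L = len D j"
      have pa: "(i,a) \<in> pts D" using h by (simp add: pts_def)
      then have "g (i,a) \<in> pts D" using IET_pts[OF g] by blast
      then have "0 \<le> wrap D j (a + t) \<and> wrap D j (a + t) < L" using jt[of a] h by (simp add: pts_def L_def)
      then have Lp: "L > 0" by linarith
      define k where "k = \<lfloor>(a+t)/L\<rfloor>"
      have key: "\<lfloor>(y+t)/L\<rfloor> = k" if y: "a \<le> y" "y < b" for y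
      proof -
        have "k \<le> \<lfloor>(y+t)/L\<rfloor>" unfolding k_def
          by (rule floor_mono) (use y Lp in \<open>simp add: divide_right_mono\<close>)
        moreover have "\<not> \<lfloor>(y+t)/L\<rfloor> \<ge> k+1"
        proof
          assume ge: "\<lfloor>(y+t)/L\<rfloor> \<ge> k+1"
          define y1 where "y1 = (of_int k+1)*L - t"
          have "(a+t)/L < of_int k+1" unfolding k_def by linarith
          then have "a + t < (of_int k + 1) * L" using Lp by (simp add: field_simps)
          then have a1: "a < y1" unfolding y1_def by linarith
          have "of_int k + 1 \<le> (y+t)/L" using ge by linarith
          then have "(of_int k + 1) * L \<le> y + t" using Lp by (simp add: field_simps)
          then have y1y: "y1 \<le> y" unfolding y1_def by linarith
          have "wrap D j (y1 + t) = 0"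
            using True Lp by (simp add: wrap_def y1_def L_def[symmetric])
          then have "g (i, y1) = (j, 0)" using jt[of y1] a1 y1y y by simp
          then have "(i, y1) \<in> B'" unfolding B'_def using j by auto
          then show False using h(5) a1 y1y y by auto
        qed
        ultimately show ?thesis by linarith
      qed
      have "g (i, y) = (j, y + (t - L * of_int k))" if "a \<le> y" "y < b" for y
        using jt[OF that] key[OF that] True by (simp add: wrap_def L_def[symmetric] algebra_simps)
      then show ?thesis using j by blast
    qed
  qed
  then show ?thesis using fB' by blast
qed




lemma avoid:
  fixes y :: real
  assumes "finite S"
  shows "\<exists>e>0. \<forall>x\<in>S. x \<noteq> y \<longrightarrow> e \<le> \<bar>x - y\<bar>"
  using assms
proof (induction S rule: finite_induct)
  case empty then show ?case by (intro exI[of _ 1]) auto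
next
  case (insert x S)
  then obtain e where e: "e > 0" "\<forall>x\<in>S. x \<noteq> y \<longrightarrow> e \<le> \<bar>x - y\<bar>" by blast
  show ?case
  proof (cases "x = y")
    case True then show ?thesis using e by auto
  next
    case False then show ?thesis using e
      by (intro exI[of _ "min e \<bar>x - y\<bar>"]) auto
  qed
qed

definition normB :: "domain \<Rightarrow> ((nat \<times> real) \<Rightarrow> (nat \<times> real)) \<Rightarrow> (nat \<times> real) set \<Rightarrow> bool" where
  "normB D g B \<longleftrightarrow> finite B \<and> (\<forall>i a b. i < ncomp D \<and> 0 \<le> a \<and> a < b \<and> b \<le> len D i \<and>
                (\<forall>y. a < y \<and> y < b \<longrightarrow> (i, y) \<notin> B) \<longrightarrow>
          (\<exists>j t. j < ncomp D \<and> (\<forall>y. a \<le> y \<and> y < b \<longrightarrow> g (i, y) = (j, y + t))))"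

lemma normB_ex: "g \<in> IET_maps D \<Longrightarrow> \<exists>B. normB D g B"
  unfolding normB_def using normalize by blast

lemma normB_use:
  assumes "normB D g B" "i < ncomp D" "0 \<le> a" "a < b" "b \<le> len D i"
    "\<And>y. a < y \<Longrightarrow> y < b \<Longrightarrow> (i, y) \<notin> B"
  shows "\<exists>j t. j < ncomp D \<and> (\<forall>y. a \<le> y \<and> y < b \<longrightarrow> g (i, y) = (j, y + t))"
  using assms unfolding normB_def by blast

lemma inv_core:
  assumes g: "g \<in> IET_maps D" and nb: "normB D g B"
    and i: "i < ncomp D" and d: "0 \<le> y - d" "d \<ge> 0" "e > 0" "y + e \<le> len D i"
    and nob: "\<And>w. y - d < w \<Longrightarrow> w < y + e \<Longrightarrow> (i, w) \<notin> B"
    and gy: "g (i, y) = (j, z)"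
  shows "\<forall>z'. z - d \<le> z' \<and> z' < z + e \<longrightarrow> inv_into UNIV g (j, z') = (i, y + z' - z)"
proof -
  obtain j' t where tr: "\<And>w. y - d \<le> w \<Longrightarrow> w < y + e \<Longrightarrow> g (i, w) = (j', w + t)"
    using normB_use[OF nb i d(1) _ d(4) nob] d by fastforce
  have "(j', y + t) = (j, z)" using tr[of y] d gy by simp
  then have jj: "j' = j" "t = z - y" by auto
  have inj: "inj g" using IET_bij[OF g] bij_is_inj by blast
  show ?thesis
  proof (intro allI impI)
    fix z' assume z': "z - d \<le> z' \<and> z' < z + e"
    have "g (i, y + z' - z) = (j, z')" using tr[of "y + z' - z"] z' jj by simp
    then show "inv_into UNIV g (j, z') = (i, y + z' - z)"
      by (metis inj inv_into_f_f UNIV_I)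
  qed
qed

lemma fin_slice: "finite B \<Longrightarrow> finite {w. (i::nat, w::real) \<in> B}"
proof -
  assume "finite B"
  moreover have "inj (Pair i :: real \<Rightarrow> nat \<times> real)" by (auto intro: injI)
  ultimately have "finite (Pair i -` B)" by (simp add: finite_vimageI)
  then show ?thesis by (simp add: vimage_def)
qed

lemma inv_IET:
  assumes g: "g \<in> IET_maps D"
  shows "inv_into UNIV g \<in> IET_maps D"
proof -
  define g' where "g' = inv_into UNIV g"
  have bg: "bij g" using IET_bij[OF g] .
  have bg': "bij g'" unfolding g'_def using bij_imp_bij_inv[OF bg] by (simp add: inv_def)
  have gg': "\<And>p. g (g' p) = p" unfolding g'_def using bij_is_surj[OF bg] by (metis surj_f_inv_f)
  have g'g: "\<And>p. g' (g p) = p" unfolding g'_def using bij_is_inj[OF bg] by (metis inv_into_f_f UNIV_I)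
  have b1: "bij_betw g' (pts D) (pts D)"
  proof -
    have "inj_on g' (pts D)" using bg' bij_is_inj inj_on_subset by blast
    moreover have "g' ` pts D = pts D"
    proof
      show "g' ` pts D \<subseteq> pts D" using IET_inv_pts[OF g] unfolding g'_def by blast
      show "pts D \<subseteq> g' ` pts D"
      proof
        fix p assume "p \<in> pts D"
        then have "g p \<in> pts D" using IET_pts[OF g] by blast
        then show "p \<in> g' ` pts D" using g'g[of p] by (metis image_eqI)
      qed
    qed
    ultimately show ?thesis by (simp add: bij_betw_def)
  qed
  have b2: "\<forall>p. p \<notin> pts D \<longrightarrow> g' p = p"
    using IET_props(2)[OF g] g'g by metis
  obtain Bg where nb: "normB D g Bg" using normB_ex[OF g] by blast
  have fBg: "finite Bg" using nb unfolding normB_def by blast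
  define B' where "B' = g ` (Bg \<union> (\<lambda>i. (i, 0::real)) ` {..<ncomp D})"
  have fB': "finite B'" unfolding B'_def using fBg by simp
  have main: "\<exists>i t. i < ncomp D \<and> (\<forall>z. a \<le> z \<and> z < b \<longrightarrow> g' (j, z) = (i, wrap D i (z + t)))"
    if h: "j < ncomp D" "0 \<le> a" "a < b" "b \<le> len D j" "\<forall>y. a < y \<and> y < b \<longrightarrow> (j, y) \<notin> B'" for j a b
  proof -
    define \<phi> where "\<phi> z = (fst (g' (j, z)), snd (g' (j, z)) - z)" for z
    have loc: "eventually (\<lambda>z'. \<phi> z = \<phi> z') (at z within {a..<b})" if z: "z \<in> {a..<b}" for z
    proof -
      obtain i y where iy: "g' (j, z) = (i, y)" by (cases "g' (j, z)")
      have "(j, z) \<in> pts D" using z h by (simp add: pts_def)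
      then have "(i, y) \<in> pts D" using b1 iy by (metis bij_betwE)
      then have iy2: "i < ncomp D" "0 \<le> y" "y < len D i" by (auto simp: pts_def)
      have gy: "g (i, y) = (j, z)" using gg'[of "(j,z)"] iy by simp
      obtain e1 where e1: "e1 > 0" "\<forall>w\<in>{w. (i, w) \<in> Bg}. w \<noteq> y \<longrightarrow> e1 \<le> \<bar>w - y\<bar>"
        using avoid[OF fin_slice[OF fBg, of i], of y] by blast
      show ?thesis
      proof (cases "z = a")
        case True
        define e where "e = min e1 (len D i - y)"
        have e: "e > 0" "y + e \<le> len D i" using e1 iy2 unfolding e_def by auto
        have nob: "(i, w) \<notin> Bg" if "y - 0 < w" "w < y + e" for w
          using e1(2) that unfolding e_def by force
        have c: "\<forall>z'. z - 0 \<le> z' \<and> z' < z + e \<longrightarrow> g' (j, z') = (i, y + z' - z)"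
          using inv_core[OF g nb iy2(1) _ _ e(1) e(2) nob gy] iy2 unfolding g'_def by simp
        show ?thesis unfolding eventually_at
        proof (intro exI[of _ e] conjI ballI impI)
          show "e > 0" using e by simp
          fix z' assume "z' \<in> {a..<b}" "z' \<noteq> z \<and> dist z' z < e"
          then have "z \<le> z' \<and> z' < z + e" using True by (auto simp: dist_real_def)
          then show "\<phi> z = \<phi> z'" using c iy unfolding \<phi>_def by simp
        qed
      next
        case False
        then have za: "a < z" using z by simp
        have "(j, z) \<notin> B'" using h(5) za z by simp
        then have nB: "(i, y) \<notin> Bg" and y0: "y \<noteq> 0" using gy iy2(1) unfolding B'_def
          by (metis UnI1 image_eqI, metis UnI2 image_eqI lessThan_iff)
        define e where "e = min e1 (min y (len D i - y))"
        have e: "e > 0" "y + e \<le> len D i" "0 \<le> y - e" using e1 iy2 y0 unfolding e_def by auto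
        have nob: "(i, w) \<notin> Bg" if "y - e < w" "w < y + e" for w
        proof
          assume wB: "(i, w) \<in> Bg"
          then have "w \<noteq> y" using nB by auto
          then have "e1 \<le> \<bar>w - y\<bar>" using e1(2) wB by simp
          then show False using that unfolding e_def by auto
        qed
        have c: "\<forall>z'. z - e \<le> z' \<and> z' < z + e \<longrightarrow> g' (j, z') = (i, y + z' - z)"
          using inv_core[OF g nb iy2(1) e(3) _ e(1) e(2) nob gy] e unfolding g'_def by simp
        show ?thesis unfolding eventually_at
        proof (intro exI[of _ e] conjI ballI impI)
          show "e > 0" using e by simp
          fix z' assume "z' \<in> {a..<b}" "z' \<noteq> z \<and> dist z' z < e"
          then have "z - e \<le> z' \<and> z' < z + e" by (auto simp: dist_real_def)
          then show "\<phi> z = \<phi> z'" using c iy unfolding \<phi>_def by simp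
        qed
      qed
    qed
    obtain i0 y0 where iy0: "g' (j, a) = (i0, y0)" by (cases "g' (j, a)")
    have "(j, a) \<in> pts D" using h by (simp add: pts_def)
    then have "(i0, y0) \<in> pts D" using b1 iy0 by (metis bij_betwE)
    then have i0: "i0 < ncomp D" by (simp add: pts_def)
    have "g' (j, z) = (i0, wrap D i0 (z + (y0 - a)))" if z: "a \<le> z" "z < b" for z
    proof -
      have "\<phi> a = \<phi> z" by (rule connected_local_const[of "{a..<b}"]) (use loc z h in auto)
      then have e: "g' (j, z) = (i0, z + (y0 - a))" using iy0 unfolding \<phi>_def
        by (cases "g' (j, z)") auto
      have "(j, z) \<in> pts D" using h z by (simp add: pts_def)
      then have "g' (j, z) \<in> pts D" using b1 by (metis bij_betwE)
      then have "0 \<le> z + (y0 - a)" "z + (y0 - a) < len D i0" using e by (auto simp: pts_def)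
      then show ?thesis using e wrap_in by metis
    qed
    then show ?thesis using i0 by blast
  qed
  show ?thesis unfolding g'_def[symmetric] IET_maps_def mem_Collect_eq
  proof (intro conjI)
    show "\<exists>B. finite B \<and> (\<forall>i a b. i < ncomp D \<and> 0 \<le> a \<and> a < b \<and> b \<le> len D i \<and>
                (\<forall>y. a < y \<and> y < b \<longrightarrow> (i, y) \<notin> B) \<longrightarrow>
          (\<exists>j t. j < ncomp D \<and> (\<forall>y. a \<le> y \<and> y < b \<longrightarrow> g' (i, y) = (j, wrap D j (y + t)))))"
      apply (intro exI[of _ B'] conjI fB' allI impI)
      apply (elim conjE)
      apply (rule main)
      apply assumption+
      done
  qed (use b1 b2 in auto)
qed




definition stepf :: "domain \<Rightarrow> ((nat \<times> real) \<Rightarrow> 'a) \<Rightarrow> bool" where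
  "stepf D f \<longleftrightarrow> (\<exists>B. finite B \<and> (\<forall>i a b y. i < ncomp D \<and> 0 \<le> a \<and> a < b \<and> b \<le> len D i \<and>
     (\<forall>w. a < w \<and> w < b \<longrightarrow> (i, w) \<notin> B) \<and> a \<le> y \<and> y < b \<longrightarrow> f (i, y) = f (i, a)))"

definition SF :: "domain \<Rightarrow> ((nat \<times> real) \<Rightarrow> 'a::ab_group_add) set" where
  "SF D = {f \<in> Fun_grp D. stepf D f}"

lemma stepfI:
  assumes "finite B"
    "\<And>i a b y. i < ncomp D \<Longrightarrow> 0 \<le> a \<Longrightarrow> a < b \<Longrightarrow> b \<le> len D i \<Longrightarrow>
     (\<And>w. a < w \<Longrightarrow> w < b \<Longrightarrow> (i, w) \<notin> B) \<Longrightarrow> a \<le> y \<Longrightarrow> y < b \<Longrightarrow> f (i, y) = f (i, a)"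
  shows "stepf D f"
  unfolding stepf_def using assms by (intro exI[of _ B]) blast

lemma stepfE:
  assumes "stepf D f"
  obtains B where "finite B"
    "\<And>i a b y. i < ncomp D \<Longrightarrow> 0 \<le> a \<Longrightarrow> a < b \<Longrightarrow> b \<le> len D i \<Longrightarrow>
     (\<And>w. a < w \<Longrightarrow> w < b \<Longrightarrow> (i, w) \<notin> B) \<Longrightarrow> a \<le> y \<Longrightarrow> y < b \<Longrightarrow> f (i, y) = f (i, a)"
proof -
  from assms obtain B where B: "finite B" "\<forall>i a b y. i < ncomp D \<and> 0 \<le> a \<and> a < b \<and> b \<le> len D i \<and>
     (\<forall>w. a < w \<and> w < b \<longrightarrow> (i, w) \<notin> B) \<and> a \<le> y \<and> y < b \<longrightarrow> f (i, y) = f (i, a)"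
    unfolding stepf_def by blast
  show ?thesis
    apply (rule that[OF B(1)])
    apply (rule B(2)[rule_format])
    by auto
qed

lemma stepf_add:
  assumes "stepf D f" "stepf D h"
  shows "stepf D (\<lambda>p. f p + h p)"
proof -
  obtain B1 where B1: "finite B1" "\<And>i a b y. i < ncomp D \<Longrightarrow> 0 \<le> a \<Longrightarrow> a < b \<Longrightarrow> b \<le> len D i \<Longrightarrow>
     (\<And>w. a < w \<Longrightarrow> w < b \<Longrightarrow> (i, w) \<notin> B1) \<Longrightarrow> a \<le> y \<Longrightarrow> y < b \<Longrightarrow> f (i, y) = f (i, a)"
    by (rule stepfE[OF assms(1)], rule that, assumption, blast)
  obtain B2 where B2: "finite B2" "\<And>i a b y. i < ncomp D \<Longrightarrow> 0 \<le> a \<Longrightarrow> a < b \<Longrightarrow> b \<le> len D i \<Longrightarrow>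
     (\<And>w. a < w \<Longrightarrow> w < b \<Longrightarrow> (i, w) \<notin> B2) \<Longrightarrow> a \<le> y \<Longrightarrow> y < b \<Longrightarrow> h (i, y) = h (i, a)"
    by (rule stepfE[OF assms(2)], rule that, assumption, blast)
  show ?thesis
  proof (rule stepfI[of "B1 \<union> B2"])
    show "finite (B1 \<union> B2)" using B1 B2 by simp
    fix i a b y assume h: "i < ncomp D" "0 \<le> a" "a < b" "b \<le> len D i"
      "\<And>w. a < w \<Longrightarrow> w < b \<Longrightarrow> (i, w) \<notin> B1 \<union> B2" "a \<le> y" "y < b"
    have "f (i, y) = f (i, a)" by (rule B1(2)[OF h(1-4) _ h(6,7)]) (use h(5) in blast)
    moreover have "h (i, y) = h (i, a)" by (rule B2(2)[OF h(1-4) _ h(6,7)]) (use h(5) in blast)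
    ultimately show "f (i, y) + h (i, y) = f (i, a) + h (i, a)" by simp
  qed
qed

lemma stepf_neg:
  assumes "stepf D f"
  shows "stepf D (\<lambda>p. - f p)"
proof -
  obtain B1 where B1: "finite B1" "\<And>i a b y. i < ncomp D \<Longrightarrow> 0 \<le> a \<Longrightarrow> a < b \<Longrightarrow> b \<le> len D i \<Longrightarrow>
     (\<And>w. a < w \<Longrightarrow> w < b \<Longrightarrow> (i, w) \<notin> B1) \<Longrightarrow> a \<le> y \<Longrightarrow> y < b \<Longrightarrow> f (i, y) = f (i, a)"
    by (rule stepfE[OF assms(1)], rule that, assumption, blast)
  show ?thesis
  proof (rule stepfI[of B1])
    show "finite B1" using B1(1) .
    fix i a b y assume h: "i < ncomp D" "0 \<le> a" "a < b" "b \<le> len D i"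
      "\<And>w. a < w \<Longrightarrow> w < b \<Longrightarrow> (i, w) \<notin> B1" "a \<le> y" "y < b"
    have "f (i, y) = f (i, a)" by (rule B1(2)[OF h(1-4) _ h(6,7)]) (use h(5) in blast)
    then show "- f (i, y) = - f (i, a)" by simp
  qed
qed

lemma stepf_zero: "stepf D (\<lambda>_. 0)"
  by (rule stepfI[of "{}"]) auto

lemma stepf_act:
  assumes g: "g \<in> IET_maps D" and f: "stepf D f"
  shows "stepf D (act g f)"
proof -
  define g' where "g' = inv_into UNIV g"
  have g': "g' \<in> IET_maps D" unfolding g'_def using inv_IET[OF g] .
  obtain Bg where nb: "normB D g' Bg" using normB_ex[OF g'] by blast
  obtain Bf where Bf: "finite Bf" "\<And>i a b y. i < ncomp D \<Longrightarrow> 0 \<le> a \<Longrightarrow> a < b \<Longrightarrow> b \<le> len D i \<Longrightarrow>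
     (\<And>w. a < w \<Longrightarrow> w < b \<Longrightarrow> (i, w) \<notin> Bf) \<Longrightarrow> a \<le> y \<Longrightarrow> y < b \<Longrightarrow> f (i, y) = f (i, a)"
    by (rule stepfE[OF f], rule that, assumption, blast)
  have inj: "inj g'" using IET_bij[OF g'] bij_is_inj by blast
  define B where "B = Bg \<union> g' -` Bf"
  have fB: "finite B" unfolding B_def using nb Bf(1) inj by (simp add: normB_def finite_vimageI)
  show ?thesis unfolding act_def g'_def[symmetric]
  proof (rule stepfI[OF fB])
    fix i a b y assume h: "i < ncomp D" "0 \<le> a" "a < b" "b \<le> len D i"
      "\<And>w. a < w \<Longrightarrow> w < b \<Longrightarrow> (i, w) \<notin> B" "a \<le> y" "y < b"
    obtain j t where j: "j < ncomp D" and tr: "\<And>w. a \<le> w \<Longrightarrow> w < b \<Longrightarrow> g' (i, w) = (j, w + t)"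
      using normB_use[OF nb h(1-4)] h(5) unfolding B_def by blast
    have inpts: "0 \<le> w + t \<and> w + t < len D j" if "a \<le> w" "w < b" for w
    proof -
      have "(i, w) \<in> pts D" using h that by (simp add: pts_def)
      then have "g' (i, w) \<in> pts D" using IET_pts[OF g'] by blast
      then show ?thesis using tr[OF that] by (simp add: pts_def)
    qed
    have a0: "0 \<le> a + t" using inpts[of a] h by simp
    have bL: "b + t \<le> len D j"
    proof (rule ccontr)
      assume "\<not> b + t \<le> len D j"
      define M where "M = max a (len D j - t)"
      define w where "w = (M + b) / 2"
      have m: "len D j - t \<le> M" "a \<le> M" "M < b"
        using \<open>\<not> b + t \<le> len D j\<close> h(3) unfolding M_def by auto
      have "a \<le> w" using m unfolding w_def by (simp add: field_simps)
      moreover have "w < b" using m unfolding w_def by (simp add: field_simps)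
      moreover have "len D j \<le> w + t" using m unfolding w_def by (simp add: field_simps)
      ultimately show False using inpts[of w] by linarith
    qed
    have nob: "(j, w) \<notin> Bf" if "a + t < w" "w < b + t" for w
    proof
      assume "(j, w) \<in> Bf"
      moreover have "g' (i, w - t) = (j, w)" using tr[of "w - t"] that by simp
      ultimately have "(i, w - t) \<in> B" unfolding B_def by simp
      then show False using h(5)[of "w - t"] that by simp
    qed
    have "f (j, y + t) = f (j, a + t)"
      by (rule Bf(2)[OF j a0 _ bL nob]) (use h in auto)
    then show "(f \<circ> g') (i, y) = (f \<circ> g') (i, a)" using tr[OF h(6,7)] tr[of a] h by simp
  qed
qed

lemma subdomain_props:
  assumes "subdomain D J"
  obtains S where "finite S" "\<forall>(i, a, b) \<in> S. i < ncomp D \<and> 0 \<le> a \<and> a < b \<and> b \<le> len D i"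
    "J = (\<Union>(i, a, b) \<in> S. {(i, x) | x. a \<le> x \<and> x < b})"
  using assms unfolding subdomain_def by blast

lemma subdomain_pts:
  assumes "subdomain D J"
  shows "J \<subseteq> pts D"
proof -
  obtain S where S: "finite S" "\<forall>(i, a, b) \<in> S. i < ncomp D \<and> 0 \<le> a \<and> a < b \<and> b \<le> len D i"
    "J = (\<Union>(i, a, b) \<in> S. {(i, x) | x. a \<le> x \<and> x < b})" using subdomain_props[OF assms] by blast
  show ?thesis unfolding S(3) pts_def using S(2) by fastforce
qed

lemma stepf_ind:
  assumes "subdomain D J"
  shows "stepf D (ind_on J c)"
proof -
  obtain S where S: "finite S" "\<forall>(i, a, b) \<in> S. i < ncomp D \<and> 0 \<le> a \<and> a < b \<and> b \<le> len D i"
    "J = (\<Union>(i, a, b) \<in> S. {(i, x) | x. a \<le> x \<and> x < b})" using subdomain_props[OF assms] by blast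
  define B where "B = (\<lambda>(i, a, b). (i, a)) ` S \<union> (\<lambda>(i, a, b). (i, b)) ` S"
  have fB: "finite B" unfolding B_def using S(1) by simp
  show ?thesis
  proof (rule stepfI[OF fB])
    fix i a b y assume h: "i < ncomp D" "0 \<le> a" "a < b" "b \<le> len D i"
      "\<And>w. a < w \<Longrightarrow> w < b \<Longrightarrow> (i, w) \<notin> B" "a \<le> y" "y < b"
    have piece: "(k = i \<and> \<alpha> \<le> y \<and> y < \<beta>) \<longleftrightarrow> (k = i \<and> \<alpha> \<le> a \<and> a < \<beta>)" if "(k, \<alpha>, \<beta>) \<in> S" for k \<alpha> \<beta>
    proof -
      have "(k, \<alpha>) \<in> B" "(k, \<beta>) \<in> B" unfolding B_def using that by force+
      then have "k = i \<longrightarrow> \<not> (a < \<alpha> \<and> \<alpha> < b)" "k = i \<longrightarrow> \<not> (a < \<beta> \<and> \<beta> < b)" using h(5) by blast+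
      then show ?thesis using h(6,7) by auto
    qed
    have "(i, y) \<in> J \<longleftrightarrow> (i, a) \<in> J"
    proof
      assume "(i, y) \<in> J"
      then obtain k \<alpha> \<beta> where "(k, \<alpha>, \<beta>) \<in> S" "k = i \<and> \<alpha> \<le> y \<and> y < \<beta>" unfolding S(3) by blast
      then show "(i, a) \<in> J" using piece unfolding S(3) by blast
    next
      assume "(i, a) \<in> J"
      then obtain k \<alpha> \<beta> where "(k, \<alpha>, \<beta>) \<in> S" "k = i \<and> \<alpha> \<le> a \<and> a < \<beta>" unfolding S(3) by blast
      then show "(i, y) \<in> J" using piece unfolding S(3) by blast
    qed
    then show "ind_on J c (i, y) = ind_on J c (i, a)" unfolding ind_on_def by simp
  qed
qed

lemma F_J_sub:
  fixes G :: "((nat \<times> real) \<Rightarrow> (nat \<times> real)) set"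
  assumes G: "G \<subseteq> IET_maps D" and J: "subdomain D J"
  shows "(F_J D G J :: ((nat \<times> real) \<Rightarrow> 'a::ab_group_add) set) \<subseteq> SF D"
  unfolding F_J_def
proof (rule Inter_lower, unfold mem_Collect_eq, intro conjI ballI allI)
  show "SF D \<subseteq> Fun_grp D" unfolding SF_def by blast
  show "(\<lambda>_. 0) \<in> SF D" unfolding SF_def Fun_grp_def using stepf_zero by auto
  fix f h :: "(nat \<times> real) \<Rightarrow> 'a" assume "f \<in> SF D" "h \<in> SF D"
  then show "(\<lambda>p. f p + h p) \<in> SF D" unfolding SF_def Fun_grp_def using stepf_add by auto
next
  fix f :: "(nat \<times> real) \<Rightarrow> 'a" assume "f \<in> SF D"
  then show "(\<lambda>p. - f p) \<in> SF D" unfolding SF_def Fun_grp_def using stepf_neg by auto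
next
  fix g and f :: "(nat \<times> real) \<Rightarrow> 'a" assume g: "g \<in> G" and f: "f \<in> SF D"
  then have gI: "g \<in> IET_maps D" using G by blast
  have "act g f \<in> Fun_grp D"
    unfolding Fun_grp_def act_def
  proof (intro CollectI allI impI)
    fix p assume "p \<notin> pts D"
    then have "g p = p" using IET_props(2)[OF gI] by blast
    then have "inv_into UNIV g p = p" using bij_is_inj[OF IET_bij[OF gI]] by (metis inv_into_f_f UNIV_I)
    moreover have "f p = 0" using f \<open>p \<notin> pts D\<close> unfolding SF_def Fun_grp_def by blast
    ultimately show "(f \<circ> inv_into UNIV g) p = 0" by simp
  qed
  then show "act g f \<in> SF D" unfolding SF_def using stepf_act[OF gI] f unfolding SF_def by blast
next
  fix c
  show "ind_on J c \<in> SF D" unfolding SF_def Fun_grp_def using stepf_ind[OF J] subdomain_pts[OF J]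
    by (auto simp: ind_on_def)
qed




definition boff :: "domain \<Rightarrow> nat \<Rightarrow> nat \<Rightarrow> real" where
  "boff D m k = (\<Sum>k'<k. len D (k' div m))"

definition TT :: "domain \<Rightarrow> nat \<Rightarrow> real" where
  "TT D m = boff D m (ncomp D * m)"

definition enc :: "domain \<Rightarrow> nat \<Rightarrow> ('a \<Rightarrow> nat) \<Rightarrow> (nat \<times> real) \<times> 'a \<Rightarrow> nat \<times> real" where
  "enc D m idx x = (case x of ((i, y), c) \<Rightarrow> (0, (boff D m (i * m + idx c) + y) / TT D m))"

definition Phi :: "((nat \<times> real) \<Rightarrow> 'a::plus) \<Rightarrow> ((nat \<times> real) \<Rightarrow> (nat \<times> real)) \<Rightarrow> (nat \<times> real) \<times> 'a \<Rightarrow> (nat \<times> real) \<times> 'a" where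
  "Phi f g x = (case x of (q, c) \<Rightarrow> (g q, c + f (g q)))"

definition hmap :: "domain \<Rightarrow> nat \<Rightarrow> ('a::plus \<Rightarrow> nat) \<Rightarrow> ((nat \<times> real) \<Rightarrow> 'a) \<Rightarrow> ((nat \<times> real) \<Rightarrow> (nat \<times> real)) \<Rightarrow> (nat \<times> real) \<Rightarrow> (nat \<times> real)" where
  "hmap D m idx f g p = (if p \<in> enc D m idx ` (pts D \<times> UNIV)
     then enc D m idx (Phi f g (inv_into (pts D \<times> UNIV) (enc D m idx) p)) else p)"

lemma compose:
  assumes g: "g \<in> IET_maps D" and nb: "normB D g Bg"
    and Bf: "\<And>i a b y. i < ncomp D \<Longrightarrow> 0 \<le> a \<Longrightarrow> a < b \<Longrightarrow> b \<le> len D i \<Longrightarrow>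
     (\<And>w. a < w \<Longrightarrow> w < b \<Longrightarrow> (i, w) \<notin> Bf) \<Longrightarrow> a \<le> y \<Longrightarrow> y < b \<Longrightarrow> f (i, y) = f (i, a)"
    and h: "i < ncomp D" "0 \<le> a" "a < b" "b \<le> len D i"
      "\<And>w. a < w \<Longrightarrow> w < b \<Longrightarrow> (i, w) \<notin> Bg \<union> g -` Bf"
  shows "\<exists>j t. j < ncomp D \<and> (\<forall>y. a \<le> y \<and> y < b \<longrightarrow> g (i, y) = (j, y + t) \<and> f (g (i, y)) = f (g (i, a)))"
proof -
  obtain j t where j: "j < ncomp D" and tr: "\<And>w. a \<le> w \<Longrightarrow> w < b \<Longrightarrow> g (i, w) = (j, w + t)"
    using normB_use[OF nb h(1-4)] h(5) by blast
  have inpts: "0 \<le> w + t \<and> w + t < len D j" if "a \<le> w" "w < b" for w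
  proof -
    have "(i, w) \<in> pts D" using h that by (simp add: pts_def)
    then have "g (i, w) \<in> pts D" using IET_pts[OF g] by blast
    then show ?thesis using tr[OF that] by (simp add: pts_def)
  qed
  have a0: "0 \<le> a + t" using inpts[of a] h by simp
  have bL: "b + t \<le> len D j"
  proof (rule ccontr)
    assume "\<not> b + t \<le> len D j"
    define M where "M = max a (len D j - t)"
    define w where "w = (M + b) / 2"
    have m: "len D j - t \<le> M" "a \<le> M" "M < b"
      using \<open>\<not> b + t \<le> len D j\<close> h(3) unfolding M_def by auto
    have "a \<le> w" using m unfolding w_def by (simp add: field_simps)
    moreover have "w < b" using m unfolding w_def by (simp add: field_simps)
    moreover have "len D j \<le> w + t" using m unfolding w_def by (simp add: field_simps)
    ultimately show False using inpts[of w] by linarith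
  qed
  have nob: "(j, w) \<notin> Bf" if "a + t < w" "w < b + t" for w
  proof
    assume "(j, w) \<in> Bf"
    moreover have "g (i, w - t) = (j, w)" using tr[of "w - t"] that by simp
    ultimately have "(i, w - t) \<in> Bg \<union> g -` Bf" by simp
    then show False using h(5)[of "w - t"] that by simp
  qed
  have fy: "f (j, y + t) = f (j, a + t)" if "a \<le> y" "y < b" for y
    by (rule Bf[OF j a0 _ bL nob]) (use h that in auto)
  have "\<forall>y. a \<le> y \<and> y < b \<longrightarrow> g (i, y) = (j, y + t) \<and> f (g (i, y)) = f (g (i, a))"
  proof (intro allI impI conjI)
    fix y assume y: "a \<le> y \<and> y < b"
    show "g (i, y) = (j, y + t)" using tr y by simp
    have "g (i, a) = (j, a + t)" using tr[of a] h(3) by simp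
    then show "f (g (i, y)) = f (g (i, a))" using tr[of y] y fy[of y] by simp
  qed
  then show ?thesis using j by blast
qed

lemma IET_U_intro:
  fixes B :: "(nat \<times> real) set" and h :: "(nat \<times> real) \<Rightarrow> (nat \<times> real)"
  assumes "bij_betw h (pts unit_interval) (pts unit_interval)"
    "\<And>p. p \<notin> pts unit_interval \<Longrightarrow> h p = p" "finite B"
    "\<And>a b. 0 \<le> a \<Longrightarrow> a < b \<Longrightarrow> b \<le> 1 \<Longrightarrow> (\<And>y. a < y \<Longrightarrow> y < b \<Longrightarrow> (0, y) \<notin> B) \<Longrightarrow>
       \<exists>t. \<forall>y. a \<le> y \<and> y < b \<longrightarrow> h (0, y) = (0, y + t)"
  shows "h \<in> IET_maps unit_interval"
proof -
  have 3: "\<forall>i a b. i < ncomp unit_interval \<and> 0 \<le> a \<and> a < b \<and> b \<le> len unit_interval i \<and>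
                (\<forall>y. a < y \<and> y < b \<longrightarrow> (i, y) \<notin> B) \<longrightarrow>
          (\<exists>j t. j < ncomp unit_interval \<and> (\<forall>y. a \<le> y \<and> y < b \<longrightarrow> h (i, y) = (j, wrap unit_interval j (y + t))))"
  proof (intro allI impI)
    fix i a b
    assume hh: "i < ncomp unit_interval \<and> 0 \<le> a \<and> a < b \<and> b \<le> len unit_interval i \<and>
                (\<forall>y. a < y \<and> y < b \<longrightarrow> (i, y) \<notin> B)"
    then have i0: "i = 0" by (simp add: unit_interval_def)
    obtain t where "\<forall>y. a \<le> y \<and> y < b \<longrightarrow> h (0, y) = (0, y + t)"
      using assms(4)[of a b] hh i0 by (auto simp: unit_interval_def)
    then show "\<exists>j t. j < ncomp unit_interval \<and> (\<forall>y. a \<le> y \<and> y < b \<longrightarrow> h (i, y) = (j, wrap unit_interval j (y + t)))"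
      using i0 by (intro exI[of _ 0] exI[of _ t]) (simp add: unit_interval_def wrap_def)
  qed
  show ?thesis
    unfolding IET_maps_def mem_Collect_eq
    apply (intro conjI)
      apply (fact assms(1))
     apply (use assms(2) in blast)
    apply (rule exI[of _ B], rule conjI[OF assms(3)], fact 3)
    done
qed

lemma boff_Suc: "boff D m (Suc k) = boff D m k + len D (k div m)"
  by (simp add: boff_def)

context
  fixes D :: domain and idx :: "'a::{finite, ab_group_add} \<Rightarrow> nat" and m :: nat
  assumes dom: "is_domain D" and idxb: "bij_betw idx UNIV {..<m}" and mdef: "m = card (UNIV :: 'a set)"
begin

abbreviation "n \<equiv> ncomp D"

lemma m_pos: "m > 0" using mdef by (simp add: card_gt_0_iff)

lemma n_pos: "n > 0" using dom unfolding is_domain_def by simp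

lemma idx_lt: "idx c < m" using idxb by (auto simp: bij_betw_def)

lemma idx_inj: "idx c = idx c' \<Longrightarrow> c = c'" using idxb by (auto simp: bij_betw_def inj_on_def)

lemma blen_pos: "k < n * m \<Longrightarrow> len D (k div m) > 0"
proof -
  assume "k < n * m"
  then have "k div m < n" by (simp add: less_mult_imp_div_less)
  then show ?thesis using dom unfolding is_domain_def by simp
qed

lemma boff_mono: "k \<le> k' \<Longrightarrow> k' \<le> n * m \<Longrightarrow> boff D m k \<le> boff D m k'"
proof (induction k' rule: dec_induct)
  case base then show ?case by simp
next
  case (step q)
  then have "len D (q div m) > 0" using blen_pos by simp
  then show ?case using step by (simp add: boff_Suc)
qed

lemma k_lt: "i < n \<Longrightarrow> i * m + idx c < n * m"
proof -
  assume i: "i < n"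
  have "i * m + idx c < i * m + m" using idx_lt by simp
  also have "\<dots> = Suc i * m" by simp
  also have "\<dots> \<le> n * m" using mult_le_mono1[of "Suc i" n m] i by simp
  finally show ?thesis .
qed

lemma k_div: "(i * m + idx c) div m = i"
  using idx_lt[of c] by simp

lemma k_mod: "(i * m + idx c) mod m = idx c"
  using idx_lt[of c] by simp

lemma TT_pos: "TT D m > 0"
proof -
  have "0 < n * m" using n_pos m_pos by simp
  then have "boff D m 1 \<le> TT D m" unfolding TT_def using boff_mono[of 1 "n * m"] by simp
  moreover have "boff D m 1 > 0" using blen_pos[of 0] n_pos m_pos by (simp add: boff_def)
  ultimately show ?thesis by simp
qed

lemma boff_nonneg: "k \<le> n * m \<Longrightarrow> 0 \<le> boff D m k"
  using boff_mono[of 0 k] by (simp add: boff_def)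

abbreviation "P \<equiv> pts D \<times> (UNIV :: 'a set)"
abbreviation "E \<equiv> enc D m idx"

lemma enc_eq: "E ((i, y), c) = (0, (boff D m (i * m + idx c) + y) / TT D m)"
  by (simp add: enc_def)

lemma enc_block:
  assumes "(i, y) \<in> pts D"
  shows "boff D m (i * m + idx c) \<le> boff D m (i * m + idx c) + y"
    "boff D m (i * m + idx c) + y < boff D m (Suc (i * m + idx c))"
  using assms by (auto simp: pts_def boff_Suc k_div)

lemma enc_inj: "inj_on E P"
proof (rule inj_onI)
  fix x x' assume x: "x \<in> P" and x': "x' \<in> P" and e: "E x = E x'"
  obtain i y c where xe: "x = ((i, y), c)" by (metis prod.exhaust)
  obtain i' y' c' where xe': "x' = ((i', y'), c')" by (metis prod.exhaust)
  define k where "k = i * m + idx c"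
  define k' where "k' = i' * m + idx c'"
  have p: "(i, y) \<in> pts D" "(i', y') \<in> pts D" using x x' xe xe' by auto
  have kk: "k < n * m" "k' < n * m" using p k_lt unfolding k_def k'_def by (auto simp: pts_def)
  have eq: "boff D m k + y = boff D m k' + y'"
    using e TT_pos unfolding xe xe' enc_eq k_def[symmetric] k'_def[symmetric] by simp
  have b1: "boff D m k \<le> boff D m k + y" "boff D m k + y < boff D m (Suc k)"
    using enc_block[OF p(1)] unfolding k_def by auto
  have b2: "boff D m k' \<le> boff D m k' + y'" "boff D m k' + y' < boff D m (Suc k')"
    using enc_block[OF p(2)] unfolding k'_def by auto
  have "\<not> k < k'"
  proof
    assume "k < k'"
    then have "boff D m (Suc k) \<le> boff D m k'" using boff_mono kk by simp
    then show False using eq b1 b2 by linarith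
  qed
  moreover have "\<not> k' < k"
  proof
    assume "k' < k"
    then have "boff D m (Suc k') \<le> boff D m k" using boff_mono kk by simp
    then show False using eq b1 b2 by linarith
  qed
  ultimately have kk': "k = k'" by simp
  then have "y = y'" using eq by simp
  moreover have "i = i'" using kk' k_div unfolding k_def k'_def by metis
  moreover have "c = c'" using kk' k_mod idx_inj unfolding k_def k'_def by metis
  ultimately show "x = x'" using xe xe' by simp
qed

lemma enc_pts: "x \<in> P \<Longrightarrow> E x \<in> pts unit_interval"
proof -
  assume x: "x \<in> P"
  obtain i y c where xe: "x = ((i, y), c)" by (metis prod.exhaust)
  have p: "(i, y) \<in> pts D" using x xe by auto
  have kk: "i * m + idx c < n * m" using p k_lt by (auto simp: pts_def)
  have "boff D m (Suc (i * m + idx c)) \<le> TT D m" unfolding TT_def using kk boff_mono by simp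
  moreover have "0 \<le> boff D m (i * m + idx c)" using boff_nonneg kk by simp
  ultimately show ?thesis using enc_block[OF p, of c] TT_pos p unfolding xe enc_eq
    by (auto simp: pts_def unit_interval_def divide_simps)
qed

lemma hmap_enc: fixes f :: "(nat \<times> real) \<Rightarrow> 'a" shows "x \<in> P \<Longrightarrow> hmap D m idx f g (E x) = E (Phi f g x)"
  unfolding hmap_def using enc_inj by (simp add: inv_into_f_f)

lemma hmap_out: fixes f :: "(nat \<times> real) \<Rightarrow> 'a" shows "p \<notin> E ` P \<Longrightarrow> hmap D m idx f g p = p"
  unfolding hmap_def by simp

lemma Phi_P: fixes f :: "(nat \<times> real) \<Rightarrow> 'a" shows "g \<in> IET_maps D \<Longrightarrow> x \<in> P \<Longrightarrow> Phi f g x \<in> P"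
  unfolding Phi_def using IET_pts by (auto split: prod.splits)

lemma Phi_inj: fixes f :: "(nat \<times> real) \<Rightarrow> 'a" shows "g \<in> IET_maps D \<Longrightarrow> Phi f g x = Phi f g x' \<Longrightarrow> x = x'"
proof -
  assume g: "g \<in> IET_maps D" and e: "Phi f g x = Phi f g x'"
  have inj: "inj g" using IET_bij[OF g] bij_is_inj by blast
  obtain q c where x: "x = (q, c)" by (cases x)
  obtain q' c' where x': "x' = (q', c')" by (cases x')
  have "g q = g q'" using e unfolding x x' Phi_def by simp
  then have "q = q'" using inj by (simp add: inj_eq)
  moreover then have "c = c'" using e unfolding x x' Phi_def by simp
  ultimately show ?thesis using x x' by simp
qed

lemma Phi_surj: fixes f :: "(nat \<times> real) \<Rightarrow> 'a" shows "g \<in> IET_maps D \<Longrightarrow> y \<in> P \<Longrightarrow> \<exists>x\<in>P. Phi f g x = y"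
proof -
  assume g: "g \<in> IET_maps D" and y: "y \<in> P"
  obtain q' c' where ye: "y = (q', c')" by (cases y)
  have b: "bij g" using IET_bij[OF g] .
  define q where "q = inv_into UNIV g q'"
  have gq: "g q = q'" unfolding q_def using bij_is_surj[OF b] by (metis surj_f_inv_f)
  have "q \<in> pts D" using y ye IET_pts[OF g, of q] gq by simp
  moreover have "Phi f g (q, c' - f q') = y" unfolding Phi_def ye using gq by simp
  ultimately show ?thesis by blast
qed

lemma hmap_bij:
  fixes f :: "(nat \<times> real) \<Rightarrow> 'a"
  assumes g: "g \<in> IET_maps D"
  shows "bij_betw (hmap D m idx f g) (pts unit_interval) (pts unit_interval)"
proof -
  let ?h = "hmap D m idx f g"
  have EP: "E ` P \<subseteq> pts unit_interval" using enc_pts by blast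
  have hE: "?h p \<in> E ` P" if "p \<in> E ` P" for p
    using that hmap_enc Phi_P[OF g] by auto
  have inj: "inj_on ?h (pts unit_interval)"
  proof (rule inj_onI)
    fix p1 p2 assume p: "p1 \<in> pts unit_interval" "p2 \<in> pts unit_interval" and e: "?h p1 = ?h p2"
    show "p1 = p2"
    proof (cases "p1 \<in> E ` P"; cases "p2 \<in> E ` P")
      assume a: "p1 \<in> E ` P" "p2 \<in> E ` P"
      then obtain x1 x2 where x: "x1 \<in> P" "x2 \<in> P" "p1 = E x1" "p2 = E x2" by blast
      then have "E (Phi f g x1) = E (Phi f g x2)" using e hmap_enc by simp
      then have "Phi f g x1 = Phi f g x2" using enc_inj Phi_P[OF g] x by (meson inj_onD)
      then have "x1 = x2" by (rule Phi_inj[OF g])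
      then show ?thesis using x by simp
    next
      assume a: "p1 \<in> E ` P" "p2 \<notin> E ` P"
      then show ?thesis using e hE hmap_out by metis
    next
      assume a: "p1 \<notin> E ` P" "p2 \<in> E ` P"
      then show ?thesis using e hE hmap_out by metis
    next
      assume a: "p1 \<notin> E ` P" "p2 \<notin> E ` P"
      then show ?thesis using e hmap_out by metis
    qed
  qed
  have "?h ` pts unit_interval = pts unit_interval"
  proof
    show "?h ` pts unit_interval \<subseteq> pts unit_interval"
      using hE EP hmap_out by (smt (verit) image_subset_iff subsetD)
    show "pts unit_interval \<subseteq> ?h ` pts unit_interval"
    proof
      fix p assume p: "p \<in> pts unit_interval"
      show "p \<in> ?h ` pts unit_interval"
      proof (cases "p \<in> E ` P")
        case True
        then obtain y where y: "y \<in> P" "p = E y" by blast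
        then obtain x where x: "x \<in> P" "Phi f g x = y" using Phi_surj[OF g] by blast
        then have "?h (E x) = p" using hmap_enc y by simp
        moreover have "E x \<in> pts unit_interval" using enc_pts x by blast
        ultimately show ?thesis by (metis image_eqI)
      next
        case False
        then show ?thesis using p hmap_out by (metis image_eqI)
      qed
    qed
  qed
  then show ?thesis using inj by (simp add: bij_betw_def)
qed

lemma hmap_IET:
  fixes f :: "(nat \<times> real) \<Rightarrow> 'a"
  assumes g: "g \<in> IET_maps D" and sf: "stepf D f"
  shows "hmap D m idx f g \<in> IET_maps unit_interval"
proof -
  obtain Bg where nb: "normB D g Bg" using normB_ex[OF g] by blast
  obtain Bf where fBf: "finite Bf" and Bf: "\<And>i a b y. i < ncomp D \<Longrightarrow> 0 \<le> a \<Longrightarrow> a < b \<Longrightarrow> b \<le> len D i \<Longrightarrow>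
     (\<And>w. a < w \<Longrightarrow> w < b \<Longrightarrow> (i, w) \<notin> Bf) \<Longrightarrow> a \<le> y \<Longrightarrow> y < b \<Longrightarrow> f (i, y) = f (i, a)"
    by (rule stepfE[OF sf], rule that, assumption, blast)
  have inj: "inj g" using IET_bij[OF g] bij_is_inj by blast
  define S where "S = Bg \<union> g -` Bf"
  have fS: "finite S" unfolding S_def using nb fBf inj by (simp add: normB_def finite_vimageI)
  define T where "T = TT D m"
  have Tp: "T > 0" unfolding T_def using TT_pos .
  define BB where "BB = E ` (S \<times> UNIV) \<union> (\<lambda>k. (0::nat, boff D m k / T)) ` {..n * m}"
  have fBB: "finite BB" unfolding BB_def using fS by simp
  show ?thesis
  proof (rule IET_U_intro[OF hmap_bij[OF g] _ fBB])
    fix p :: "nat \<times> real" assume "p \<notin> pts unit_interval"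
    then have "p \<notin> E ` P" using enc_pts by blast
    then show "hmap D m idx f g p = p" by (rule hmap_out)
  next
    fix a b :: real
    assume ha: "0 \<le> a" "a < b" "b \<le> 1" and nob: "\<And>y. a < y \<Longrightarrow> y < b \<Longrightarrow> (0, y) \<notin> BB"
    show "\<exists>t. \<forall>y. a \<le> y \<and> y < b \<longrightarrow> hmap D m idx f g (0, y) = (0, y + t)"
    proof (cases "\<exists>k<n * m. boff D m k / T \<le> a \<and> a < boff D m (Suc k) / T")
      case True
      then obtain k where k: "k < n * m" "boff D m k / T \<le> a" "a < boff D m (Suc k) / T" by blast
      have bk: "b \<le> boff D m (Suc k) / T"
      proof (rule ccontr)
        assume "\<not> b \<le> boff D m (Suc k) / T"
        moreover have "(0, boff D m (Suc k) / T) \<in> BB" unfolding BB_def using k(1) by auto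
        ultimately show False using nob k(3) by force
      qed
      define i0 where "i0 = k div m"
      define c0 where "c0 = inv_into UNIV idx (k mod m)"
      have "k mod m \<in> idx ` UNIV" using idxb m_pos unfolding bij_betw_def by simp
      then have ic0: "idx c0 = k mod m" unfolding c0_def by (simp add: f_inv_into_f)
      have kdef: "k = i0 * m + idx c0" unfolding i0_def ic0 by simp
      have i0n: "i0 < n" unfolding i0_def using k(1) by (simp add: less_mult_imp_div_less)
      have Lk: "len D i0 = boff D m (Suc k) - boff D m k" by (simp add: boff_Suc i0_def)
      define a' where "a' = a * T - boff D m k"
      define b' where "b' = b * T - boff D m k"
      have a'0: "0 \<le> a'" using k(2) Tp unfolding a'_def by (simp add: pos_divide_le_eq)
      have ab': "a' < b'" using ha(2) Tp unfolding a'_def b'_def by simp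
      have b'L: "b' \<le> len D i0" using bk Tp unfolding b'_def Lk by (simp add: pos_le_divide_eq)
      have noS: "(i0, w) \<notin> Bg \<union> g -` Bf" if w: "a' < w" "w < b'" for w
      proof
        assume "(i0, w) \<in> Bg \<union> g -` Bf"
        then have "E ((i0, w), c0) \<in> BB" unfolding BB_def S_def by auto
        moreover have "E ((i0, w), c0) = (0, (boff D m k + w) / T)" unfolding enc_eq T_def kdef ..
        moreover have "a < (boff D m k + w) / T" using w(1) Tp unfolding a'_def by (simp add: pos_less_divide_eq)
        moreover have "(boff D m k + w) / T < b" using w(2) Tp unfolding b'_def by (simp add: pos_divide_less_eq)
        ultimately show False using nob by auto
      qed
      have cc: "\<exists>j t. j < n \<and> (\<forall>y. a' \<le> y \<and> y < b' \<longrightarrow> g (i0, y) = (j, y + t) \<and> f (g (i0, y)) = f (g (i0, a')))"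
        apply (rule compose[where f=f and Bf=Bf and Bg=Bg and g=g and D=D and i=i0 and a=a' and b=b'])
               apply (rule g)
              apply (rule nb)
             apply (rule Bf; assumption)
            apply (rule i0n)
           apply (rule a'0)
          apply (rule ab')
         apply (rule b'L)
        apply (rule noS; assumption)
        done
      obtain j t where j: "j < n" and jt: "\<forall>y. a' \<le> y \<and> y < b' \<longrightarrow> g (i0, y) = (j, y + t) \<and> f (g (i0, y)) = f (g (i0, a'))"
        using cc by blast
      define v where "v = f (g (i0, a'))"
      define K where "K = j * m + idx (c0 + v)"
      show ?thesis
      proof (intro exI[of _ "(boff D m K + t - boff D m k) / T"] allI impI)
        fix x assume x: "a \<le> x \<and> x < b"
        define y where "y = x * T - boff D m k"
        have y: "a' \<le> y" "y < b'" using x Tp unfolding y_def a'_def b'_def by (auto simp: mult_right_mono)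
        have yp: "(i0, y) \<in> pts D" using y a'0 b'L i0n by (simp add: pts_def)
        have ex: "E ((i0, y), c0) = (0, x)" unfolding enc_eq kdef[symmetric] T_def[symmetric] y_def
          using Tp by simp
        have h0: "hmap D m idx f g (0, x) = E (Phi f g ((i0, y), c0))" using hmap_enc[of "((i0, y), c0)"] ex yp by simp
        have gy: "g (i0, y) = (j, y + t)" using jt y by simp
        have fv: "f (g (i0, y)) = v" using jt y unfolding v_def by blast
        then have fv': "f (j, y + t) = v" using gy by simp
        have "E (Phi f g ((i0, y), c0)) = E ((j, y + t), c0 + v)" unfolding Phi_def using gy fv' by simp
        also have "\<dots> = (0, (boff D m K + y + t) / T)" unfolding enc_eq K_def T_def by (simp add: add.assoc)
        also have "\<dots> = (0, x + (boff D m K + t - boff D m k) / T)" unfolding y_def using Tp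
          by (simp add: field_simps)
        finally show "hmap D m idx f g (0, x) = (0, x + (boff D m K + t - boff D m k) / T)" using h0 by simp
      qed
    next
      case False
      have "hmap D m idx f g (0, x) = (0, x + 0)" if x: "a \<le> x" "x < b" for x
      proof -
        have "(0, x) \<notin> E ` P"
        proof
          assume "(0, x) \<in> E ` P"
          then obtain i1 y1 c1 where p1: "(i1, y1) \<in> pts D" and e1: "(0, x) = E ((i1, y1), c1)" by auto
          define k1 where "k1 = i1 * m + idx c1"
          have k1n: "k1 < n * m" unfolding k1_def using k_lt p1 by (simp add: pts_def)
          have xe: "x = (boff D m k1 + y1) / T" using e1 unfolding enc_eq k1_def T_def by simp
          have bl: "boff D m k1 \<le> boff D m k1 + y1" "boff D m k1 + y1 < boff D m (Suc k1)"
            using enc_block[OF p1, of c1] unfolding k1_def by auto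
          have x1: "boff D m k1 / T \<le> x" "x < boff D m (Suc k1) / T"
            using bl Tp unfolding xe by (auto simp: divide_right_mono divide_strict_right_mono)
          show False
          proof (cases "boff D m k1 / T \<le> a")
            case True
            then show False using False k1n x1 x by auto
          next
            case False
            moreover have "(0, boff D m k1 / T) \<in> BB" unfolding BB_def using k1n by auto
            ultimately show False using nob x1 x by force
          qed
        qed
        then show ?thesis using hmap_out by simp
      qed
      then show ?thesis by blast
    qed
  qed
qed

lemma hmap_mult:
  fixes f f' :: "(nat \<times> real) \<Rightarrow> 'a"
  assumes g: "g \<in> IET_maps D" and g': "g' \<in> IET_maps D"
  shows "hmap D m idx (\<lambda>p. f p + act g f' p) (g \<circ> g') = hmap D m idx f g \<circ> hmap D m idx f' g'"
proof
  fix p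
  have inj: "inj g" using IET_bij[OF g] bij_is_inj by blast
  show "hmap D m idx (\<lambda>p. f p + act g f' p) (g \<circ> g') p = (hmap D m idx f g \<circ> hmap D m idx f' g') p"
  proof (cases "p \<in> E ` P")
    case True
    then obtain q c where x: "(q, c) \<in> P" "p = E (q, c)" by auto
    have gc: "g \<circ> g' \<in> IET_maps D \<or> True" by simp
    have "hmap D m idx (\<lambda>p. f p + act g f' p) (g \<circ> g') p
        = E ((g (g' q), c + (f (g (g' q)) + f' (inv_into UNIV g (g (g' q))))))"
      using x hmap_enc unfolding Phi_def act_def by simp
    also have "\<dots> = E ((g (g' q), c + f' (g' q) + f (g (g' q))))"
      using inj by (simp add: inv_into_f_f add_ac)
    also have "\<dots> = hmap D m idx f g (E ((g' q, c + f' (g' q))))"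
      using hmap_enc[of "(g' q, c + f' (g' q))" f g] Phi_P[OF g', of "(q, c)" f'] x unfolding Phi_def by simp
    also have "\<dots> = (hmap D m idx f g \<circ> hmap D m idx f' g') p"
      using x hmap_enc[of "(q, c)" f' g'] unfolding Phi_def by simp
    finally show ?thesis .
  next
    case False
    then show ?thesis using hmap_out by simp
  qed
qed

lemma hmap_inj:
  fixes f f' :: "(nat \<times> real) \<Rightarrow> 'a"
  assumes g: "g \<in> IET_maps D" and g': "g' \<in> IET_maps D"
    and f: "f \<in> Fun_grp D" and f': "f' \<in> Fun_grp D"
    and e: "hmap D m idx f g = hmap D m idx f' g'"
  shows "f = f' \<and> g = g'"
proof -
  have k: "g q = g' q \<and> f (g q) = f' (g' q)" if q: "q \<in> pts D" for q
  proof -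
    have x: "(q, 0) \<in> P" using q by simp
    have "E (Phi f g (q, 0)) = E (Phi f' g' (q, 0))" using e hmap_enc[OF x] by metis
    then have "Phi f g (q, 0) = Phi f' g' (q, 0)"
      using enc_inj Phi_P[OF g x] Phi_P[OF g' x] by (meson inj_onD)
    then show ?thesis unfolding Phi_def by auto
  qed
  have gg: "g = g'"
  proof
    fix q show "g q = g' q"
    proof (cases "q \<in> pts D")
      case True then show ?thesis using k by blast
    next
      case False then show ?thesis using IET_props(2)[OF g] IET_props(2)[OF g'] by metis
    qed
  qed
  have ff: "f = f'"
  proof
    fix p show "f p = f' p"
    proof (cases "p \<in> pts D")
      case True
      have b: "bij g" using IET_bij[OF g] .
      define q where "q = inv_into UNIV g p"
      have gq: "g q = p" unfolding q_def using bij_is_surj[OF b] by (metis surj_f_inv_f)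
      have "q \<in> pts D" using True IET_pts[OF g, of q] gq by simp
      then show ?thesis using k[of q] gq by metis
    next
      case False then show ?thesis using f f' unfolding Fun_grp_def by (cases p) simp
    qed
  qed
  show ?thesis using ff gg by simp
qed

end

theorem mainTheorem19:
  fixes D :: domain
    and G :: "((nat \<times> real) \<Rightarrow> (nat \<times> real)) set"
    and J :: "(nat \<times> real) set"
  assumes "is_domain D"
    and "subgroup G (IET_group D)"
    and "subdomain D J"
  shows "\<exists>h. h \<in> hom (semidirect D G J :: (((nat \<times> real) \<Rightarrow> 'a::{ab_group_add, finite}) \<times> _) monoid) IET
             \<and> inj_on h (carrier (semidirect D G J :: (((nat \<times> real) \<Rightarrow> 'a) \<times> _) monoid))"
proof -
  define m where "m = card (UNIV :: 'a set)"
  obtain idx :: "'a \<Rightarrow> nat" where idx0: "bij_betw idx UNIV {0..<m}"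
    using ex_bij_betw_finite_nat[of "UNIV :: 'a set"] unfolding m_def by auto
  have idxb: "bij_betw idx UNIV {..<m}" using idx0 by (simp add: atLeast0LessThan)
  note dom = assms(1)
  have GI: "G \<subseteq> IET_maps D" using subgroup.subset[OF assms(2)] by (simp add: IET_group_def)
  have FS: "(F_J D G J :: ((nat \<times> real) \<Rightarrow> 'a) set) \<subseteq> SF D" using F_J_sub[OF GI assms(3)] .
  define h where "h = (\<lambda>(x :: ((nat \<times> real) \<Rightarrow> 'a) \<times> ((nat \<times> real) \<Rightarrow> (nat \<times> real))). hmap D m idx (fst x) (snd x))"
  have car: "carrier (semidirect D G J :: (((nat \<times> real) \<Rightarrow> 'a) \<times> _) monoid) = F_J D G J \<times> G"
    by (simp add: semidirect_def)
  have mem: "h x \<in> IET_maps unit_interval" if "x \<in> F_J D G J \<times> G" for x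
  proof -
    obtain f g where x: "x = (f, g)" by (cases x)
    have "f \<in> SF D" "g \<in> IET_maps D" using that x FS GI by auto
    then show ?thesis unfolding h_def x using hmap_IET[OF dom idxb m_def] unfolding SF_def by auto
  qed
  have hom: "h \<in> hom (semidirect D G J :: (((nat \<times> real) \<Rightarrow> 'a) \<times> _) monoid) IET"
    unfolding hom_def
  proof (intro CollectI conjI ballI)
    show "h \<in> carrier (semidirect D G J) \<rightarrow> carrier IET"
      using mem unfolding car by (auto simp: IET_def IET_group_def)
    fix x y assume x: "x \<in> carrier (semidirect D G J :: (((nat \<times> real) \<Rightarrow> 'a) \<times> _) monoid)"
      and y: "y \<in> carrier (semidirect D G J :: (((nat \<times> real) \<Rightarrow> 'a) \<times> _) monoid)"
    obtain f g where xe: "x = (f, g)" by (cases x)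
    obtain f' g' where ye: "y = (f', g')" by (cases y)
    have "g \<in> IET_maps D" "g' \<in> IET_maps D" using x y xe ye GI car by auto
    then show "h (x \<otimes>\<^bsub>semidirect D G J\<^esub> y) = h x \<otimes>\<^bsub>IET\<^esub> h y"
      unfolding xe ye h_def using hmap_mult[OF dom idxb m_def]
      by (simp add: semidirect_def IET_def IET_group_def)
  qed
  have inj: "inj_on h (carrier (semidirect D G J :: (((nat \<times> real) \<Rightarrow> 'a) \<times> _) monoid))"
  proof (rule inj_onI)
    fix x y assume x: "x \<in> carrier (semidirect D G J :: (((nat \<times> real) \<Rightarrow> 'a) \<times> _) monoid)"
      and y: "y \<in> carrier (semidirect D G J :: (((nat \<times> real) \<Rightarrow> 'a) \<times> _) monoid)"
      and e: "h x = h y"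
    obtain f g where xe: "x = (f, g)" by (cases x)
    obtain f' g' where ye: "y = (f', g')" by (cases y)
    have "g \<in> IET_maps D" "g' \<in> IET_maps D" "f \<in> Fun_grp D" "f' \<in> Fun_grp D"
      using x y xe ye GI car FS unfolding SF_def by auto
    then have "f = f' \<and> g = g'" using hmap_inj[OF dom idxb m_def] e unfolding xe ye h_def by simp
    then show "x = y" using xe ye by simp
  qed
  show ?thesis using hom inj by blast
qed


end
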